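(* Let $a_1,\dots,a_m\in\{0,1\}^n$ and $\epsilon_1,\dots,\epsilon_m\in\{0,1\}$, and consider the system of $\mathbb{F}_2$-linear equations $a_j\cdot b=\epsilon_j$ ($1\le j\le m$) in the unknown $b\in\{0,1\}^n$. Run the Triangular Basis Algorithm, with dimension $n+1$, on the vectors $x_j=a_j\Vert\epsilon_j\in\{0,1\}^{n+1}$. Then the system has a solution if and only if $av_{n+1}=1$ at the end of the algorithm.
   Context: All arithmetic is over $\mathbb{F}_2$ ($+$ is XOR, $\wedge$ is AND, $\cdot$ is the standard dot product). For a vector $v\in\{0,1\}^N$, $v[i]$ is its $i$-th bit and $v[a..b]$ the substring of bits $a$ through $b$ (empty if $a>b$); $\Vert$ is concatenation. Triangular Basis Algorithm (for vectors of length $N$). Input: $x_1,\dots,x_m\in\{0,1\}^N$ (modified in place). Auxiliary variables: bits $\mathrm{used}_j$ ($1\le j\le m$) initialized to $0$; bits $av_i$ ($1\le i\le N$) initialized to $1$; strings $b_i[(i+1)..N]$ ($1\le i\le N$) initialized to all zeros. The algorithm executes, for $i=1,\dots,N$ (outer loop) and, inside it, for $j=1,\dots,m$ (inner loop), the following four steps in order (iteration $(i,j)$): (1) $\mathrm{used}_j \leftarrow \mathrm{used}_j + (x_j[i]\wedge av_i)$; (2) $av_i\leftarrow av_i + (x_j[i]\wedge \mathrm{used}_j)$ (using the value of $\mathrm{used}_j$ just updated); (3) if $\mathrm{used}_j=1$: $b_i[(i+1)..N]\leftarrow b_i[(i+1)..N]+x_j[(i+1)..N]$; (4) if $x_j[i]=1$: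 $x_j[(i+1)..N]\leftarrow x_j[(i+1)..N]+b_i[(i+1)..N]$. *)

theory Defs
  imports Main "HOL-Library.Z2"
begin

text \<open>Bits are elements of the field F2 (type bit). A vector in F2^N is a
function nat => bit whose entries at indices 1..N are meaningful; the input
vectors x_1..x_m are x j for j in 1..m.\<close>

record tb_state =
  tb_x    :: "nat \<Rightarrow> nat \<Rightarrow> bit"   (* tb_x s j k = x_j[k] *)
  tb_used :: "nat \<Rightarrow> bit"
  tb_av   :: "nat \<Rightarrow> bit"
  tb_b    :: "nat \<Rightarrow> nat \<Rightarrow> bit"   (* tb_b s i k = b_i[k] *)

definition tb_step :: "nat \<Rightarrow> nat \<Rightarrow> nat \<Rightarrow> tb_state \<Rightarrow> tb_state" where
  "tb_step N i j s =
    (let x = tb_x s;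
         u = (tb_used s)(j := tb_used s j + x j i * tb_av s i);
         a = (tb_av s)(i := tb_av s i + x j i * u j);
         b = (if u j = 1
              then (tb_b s)(i := (\<lambda>k. if i < k \<and> k \<le> N then tb_b s i k + x j k else tb_b s i k))
              else tb_b s);
         x' = (if x j i = 1
               then x(j := (\<lambda>k. if i < k \<and> k \<le> N then x j k + b i k else x j k))
               else x)
     in \<lparr>tb_x = x', tb_used = u, tb_av = a, tb_b = b\<rparr>)"

definition tb_init :: "(nat \<Rightarrow> nat \<Rightarrow> bit) \<Rightarrow> tb_state" where
  "tb_init x = \<lparr>tb_x = x, tb_used = (\<lambda>_. 0), tb_av = (\<lambda>_. 1), tb_b = (\<lambda>_ _. 0)\<rparr>"

definition tb_run :: "nat \<Rightarrow> nat \<Rightarrow> (nat \<Rightarrow> nat \<Rightarrow> bit) \<Rightarrow> tb_state" where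
  "tb_run N m x = fold (\<lambda>i s. fold (\<lambda>j s'. tb_step N i j s') [1..<m+1] s) [1..<N+1] (tb_init x)"

end

theory Submission imports Defs begin
declare add_bit_eq_xor[simp del] mult_bit_eq_and[simp del]
lemma bit_add_self[simp]: "(a::bit) + a = 0"
  by (cases a) (simp_all add: add_bit_eq_xor)
lemma bit_add_self2[simp]: "(a::bit) + (a + b) = b"
  by (metis add.assoc add_0 bit_add_self)
lemma bit_cases_one: "(a::bit) = 0 \<or> a = 1" by (cases a) auto
thm tb_state.equality
lemma step_fields:
  "tb_used (tb_step N i j s) = (tb_used s)(j := tb_used s j + tb_x s j i * tb_av s i)"
  "tb_av (tb_step N i j s) = (tb_av s)(i := tb_av s i + tb_x s j i * (tb_used s j + tb_x s j i * tb_av s i))"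
  "tb_b (tb_step N i j s) = (if tb_used s j + tb_x s j i * tb_av s i = 1
              then (tb_b s)(i := (\<lambda>k. if i < k \<and> k \<le> N then tb_b s i k + tb_x s j k else tb_b s i k))
              else tb_b s)"
  by (simp_all add: tb_step_def Let_def)
lemma step_x: "tb_x (tb_step N i j s) = (if tb_x s j i = 1
               then (tb_x s)(j := (\<lambda>k. if i < k \<and> k \<le> N then tb_x s j k + tb_b (tb_step N i j s) i k else tb_x s j k))
               else tb_x s)"
  unfolding tb_step_def Let_def by (simp only: tb_state.simps)
definition E :: "nat \<Rightarrow> nat \<Rightarrow> tb_state \<Rightarrow> nat \<Rightarrow> nat \<Rightarrow> tb_state" where
"E N i s0 p j0 = \<lparr>tb_x = \<lambda>j k. if j = p \<and> i<k \<and> k\<le>N then 0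
   else if p<j \<and> j\<le>j0 \<and> tb_used s0 j = 0 \<and> tb_x s0 j i = 1 \<and> i<k \<and> k\<le>N then tb_x s0 j k + tb_x s0 p k else tb_x s0 j k,
 tb_used = (tb_used s0)(p := 1), tb_av = (tb_av s0)(i := 0),
 tb_b = (tb_b s0)(i := \<lambda>k. if i<k \<and> k\<le>N then tb_x s0 p k else 0)\<rparr>"

lemma L1:
  assumes "tb_x s j i = 1 \<longrightarrow> tb_used s j = 1"
    and "tb_used s j = 1 \<Longrightarrow> \<forall>k. i \<le> k \<and> k \<le> N \<longrightarrow> tb_x s j k = 0" and "i \<le> N"
  shows "tb_step N i j s = s"
proof -
  have x0: "tb_x s j i = 0" using assms by (cases "tb_x s j i") auto
  show ?thesis
  proof (rule tb_state.equality)
    show "tb_used (tb_step N i j s) = tb_used s" by (simp add: step_fields x0)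
    show "tb_av (tb_step N i j s) = tb_av s" by (simp add: step_fields x0)
    show "tb_x (tb_step N i j s) = tb_x s" by (simp add: step_x x0)
    show "tb_b (tb_step N i j s) = tb_b s" using assms(2) by (auto simp add: step_fields x0 fun_eq_iff)
  qed simp
qed

lemma L2:
  assumes "tb_used s p = 0" "tb_x s p i = 1" "tb_av s i = 1" "tb_b s i = (\<lambda>_. 0)"
  shows "tb_step N i p s = E N i s p p"
proof (rule tb_state.equality)
  show "tb_used (tb_step N i p s) = tb_used (E N i s p p)" using assms by (simp add: step_fields E_def)
  show "tb_av (tb_step N i p s) = tb_av (E N i s p p)" using assms by (simp add: step_fields E_def)
  show "tb_b (tb_step N i p s) = tb_b (E N i s p p)" using assms by (auto simp add: step_fields E_def fun_eq_iff)
  show "tb_x (tb_step N i p s) = tb_x (E N i s p p)" using assms by (auto simp add: step_x step_fields E_def fun_eq_iff)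
qed (simp add: E_def)

lemma L3:
  assumes "p \<le> j0" "tb_used s0 (Suc j0) = 1 \<Longrightarrow> \<forall>k. i \<le> k \<and> k \<le> N \<longrightarrow> tb_x s0 (Suc j0) k = 0" "i \<le> N"
  shows "tb_step N i (Suc j0) (E N i s0 p j0) = E N i s0 p (Suc j0)"
proof (rule tb_state.equality)
  have ne: "Suc j0 \<noteq> p" using assms by auto
  have xi: "tb_x (E N i s0 p j0) (Suc j0) i = tb_x s0 (Suc j0) i" by (simp add: E_def)
  show "tb_used (tb_step N i (Suc j0) (E N i s0 p j0)) = tb_used (E N i s0 p (Suc j0))"
    using assms ne by (auto simp add: step_fields E_def fun_eq_iff)
  show "tb_av (tb_step N i (Suc j0) (E N i s0 p j0)) = tb_av (E N i s0 p (Suc j0))"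
    using assms ne by (cases "tb_used s0 (Suc j0)") (auto simp add: step_fields E_def fun_eq_iff)
  show "tb_b (tb_step N i (Suc j0) (E N i s0 p j0)) = tb_b (E N i s0 p (Suc j0))"
    using assms ne by (auto simp add: step_fields E_def fun_eq_iff)
  show "tb_x (tb_step N i (Suc j0) (E N i s0 p j0)) = tb_x (E N i s0 p (Suc j0))"
    using assms ne by (auto simp add: step_x step_fields E_def fun_eq_iff le_Suc_eq)
qed (simp add: E_def)

definition col :: "nat \<Rightarrow> nat \<Rightarrow> nat \<Rightarrow> tb_state \<Rightarrow> tb_state" where
  "col N m i s = fold (\<lambda>j s'. tb_step N i j s') [1..<m+1] s"

definition piv :: "tb_state \<Rightarrow> nat \<Rightarrow> nat \<Rightarrow> bool" where
  "piv s i p \<longleftrightarrow> 1 \<le> p \<and> tb_used s p = 0 \<and> tb_x s p i = 1"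

lemma inner:
  assumes Hb: "\<forall>j\<in>{1..m}. tb_used s j = 1 \<longrightarrow> (\<forall>k. i \<le> k \<and> k \<le> N \<longrightarrow> tb_x s j k = 0)"
    and Hav: "tb_av s i = 1" and Hbi: "tb_b s i = (\<lambda>_. 0)" and iN: "i \<le> N"
  shows "j0 \<le> m \<Longrightarrow> fold (\<lambda>j s'. tb_step N i j s') [1..<j0+1] s =
     (if \<exists>p\<le>j0. piv s i p then E N i s (LEAST p. piv s i p) j0 else s)"
proof (induction j0)
  case 0
  then show ?case by (auto simp: piv_def)
next
  case (Suc j0)
  have split: "[1..<Suc j0 + 1] = [1..<j0+1] @ [Suc j0]" by simp
  have IH: "fold (\<lambda>j s'. tb_step N i j s') [1..<j0+1] s =
     (if \<exists>p\<le>j0. piv s i p then E N i s (LEAST p. piv s i p) j0 else s)" using Suc by simp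
  have hb: "tb_used s (Suc j0) = 1 \<Longrightarrow> \<forall>k. i \<le> k \<and> k \<le> N \<longrightarrow> tb_x s (Suc j0) k = 0"
    using Hb Suc.prems by auto
  show ?case
  proof (cases "\<exists>p\<le>j0. piv s i p")
    case True
    then obtain p where p: "p \<le> j0" "piv s i p" by auto
    have le: "(LEAST p. piv s i p) \<le> j0" using p by (meson Least_le le_trans)
    have ex: "\<exists>p\<le>Suc j0. piv s i p" using p le_SucI by blast
    show ?thesis unfolding split fold_append comp_apply IH using True ex L3[OF le hb iN] by simp
  next
    case False
    show ?thesis
    proof (cases "piv s i (Suc j0)")
      case True
      have lst: "(LEAST p. piv s i p) = Suc j0"
        apply (rule Least_equality[where P="piv s i", OF True])
        using False by (meson not_less_eq_eq)
      have ex: "\<exists>p\<le>Suc j0. piv s i p" using True by auto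
      have pv: "tb_used s (Suc j0) = 0" "tb_x s (Suc j0) i = 1" using True by (auto simp: piv_def)
      show ?thesis unfolding split fold_append comp_apply IH if_not_P[OF False] if_P[OF ex] lst
        by (simp add: L2[OF pv Hav Hbi, of N])
    next
      case F2: False
      have nex: "\<not> (\<exists>p\<le>Suc j0. piv s i p)" using False F2 le_Suc_eq by auto
      have "tb_x s (Suc j0) i = 1 \<longrightarrow> tb_used s (Suc j0) = 1" using F2 by (auto simp: piv_def)
      then show ?thesis unfolding split fold_append comp_apply IH if_not_P[OF False] if_not_P[OF nex]
        by (simp add: L1[OF _ hb iN])
    qed
  qed
qed

definition dot :: "nat \<Rightarrow> (nat \<Rightarrow> bit) \<Rightarrow> (nat \<Rightarrow> bit) \<Rightarrow> bit" where
  "dot N u w = (\<Sum>k=1..N. u k * w k)"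

definition Pv :: "tb_state \<Rightarrow> nat \<Rightarrow> nat \<Rightarrow> bit" where
  "Pv s i' k = (if k = i' then 1 else if i' < k then tb_b s i' k else 0)"

definition Yv :: "tb_state \<Rightarrow> nat \<Rightarrow> nat \<Rightarrow> nat \<Rightarrow> bit" where
  "Yv s i j k = (if k < i then 0 else tb_x s j k)"

definition Inv :: "nat \<Rightarrow> nat \<Rightarrow> (nat \<Rightarrow> nat \<Rightarrow> bit) \<Rightarrow> nat \<Rightarrow> tb_state \<Rightarrow> bool" where
  "Inv N m X i s \<longleftrightarrow>
   (\<forall>w. (\<forall>j\<in>{1..m}. dot N (X j) w = 0) \<longleftrightarrow>
        ((\<forall>i'\<in>{1..<i}. tb_av s i' = 0 \<longrightarrow> dot N (Pv s i') w = 0) \<and>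
         (\<forall>j\<in>{1..m}. tb_used s j = 0 \<longrightarrow> dot N (Yv s i j) w = 0)))
   \<and> (\<forall>j\<in>{1..m}. tb_used s j = 1 \<longrightarrow> (\<forall>k. i \<le> k \<and> k \<le> N \<longrightarrow> tb_x s j k = 0))
   \<and> (\<forall>i'. i \<le> i' \<longrightarrow> tb_av s i' = 1 \<and> tb_b s i' = (\<lambda>_. 0))"

lemma dot_cong: "(\<And>k. 1 \<le> k \<Longrightarrow> k \<le> N \<Longrightarrow> u k = v k) \<Longrightarrow> dot N u w = dot N v w"
  unfolding dot_def by (rule sum.cong) auto

lemma dot_add: "dot N (\<lambda>k. u k + v k) w = dot N u w + dot N v w"
  unfolding dot_def by (simp add: distrib_right sum.distrib)

lemma bit_sum_zero_iff: "(x::bit) + y = 0 \<longleftrightarrow> x = y"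
  by (cases x; cases y) (simp_all add: add_bit_eq_xor)

lemma col_step:
  assumes I: "Inv N m X i s" and i1: "1 \<le> i" and iN: "i \<le> N"
  shows "Inv N m X (Suc i) (col N m i s)"
proof -
  from I have orth: "\<And>w. (\<forall>j\<in>{1..m}. dot N (X j) w = 0) \<longleftrightarrow>
        ((\<forall>i'\<in>{1..<i}. tb_av s i' = 0 \<longrightarrow> dot N (Pv s i') w = 0) \<and>
         (\<forall>j\<in>{1..m}. tb_used s j = 0 \<longrightarrow> dot N (Yv s i j) w = 0))"
    and Hb: "\<forall>j\<in>{1..m}. tb_used s j = 1 \<longrightarrow> (\<forall>k. i \<le> k \<and> k \<le> N \<longrightarrow> tb_x s j k = 0)"
    and Hc: "\<forall>i'. i \<le> i' \<longrightarrow> tb_av s i' = 1 \<and> tb_b s i' = (\<lambda>_. 0)"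
    unfolding Inv_def by blast+
  have Hav: "tb_av s i = 1" and Hbi: "tb_b s i = (\<lambda>_. 0)" using Hc by auto
  have colE: "col N m i s = (if \<exists>p\<le>m. piv s i p then E N i s (LEAST p. piv s i p) m else s)"
    unfolding col_def using inner[OF Hb Hav Hbi iN, of m] by simp
  show ?thesis
  proof (cases "\<exists>p\<le>m. piv s i p")
    case False
    then have cs: "col N m i s = s" unfolding colE by (simp only: if_not_P[OF False] if_False)
    have nop: "\<And>j. j \<in> {1..m} \<Longrightarrow> tb_used s j = 0 \<Longrightarrow> tb_x s j i = 0"
      using False by (auto simp: piv_def)
    have Yeq: "\<And>j. j \<in> {1..m} \<Longrightarrow> tb_used s j = 0 \<Longrightarrow> Yv s (Suc i) j = Yv s i j"
      using nop by (auto simp: Yv_def fun_eq_iff less_Suc_eq)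
    have rng: "{1..<Suc i} = insert i {1..<i}" using i1 by auto
    show ?thesis unfolding cs Inv_def
    proof (intro conjI allI)
      fix w
      show "(\<forall>j\<in>{1..m}. dot N (X j) w = 0) \<longleftrightarrow>
        ((\<forall>i'\<in>{1..<Suc i}. tb_av s i' = 0 \<longrightarrow> dot N (Pv s i') w = 0) \<and>
         (\<forall>j\<in>{1..m}. tb_used s j = 0 \<longrightarrow> dot N (Yv s (Suc i) j) w = 0))"
        unfolding orth rng using Hav Yeq by auto
    next
      show "\<forall>j\<in>{1..m}. tb_used s j = 1 \<longrightarrow> (\<forall>k. Suc i \<le> k \<and> k \<le> N \<longrightarrow> tb_x s j k = 0)"
        using Hb by auto
    next
      fix i' show "Suc i \<le> i' \<longrightarrow> tb_av s i' = 1 \<and> tb_b s i' = (\<lambda>_. 0)" using Hc by auto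
    qed
  next
    case True
    define p where "p = (LEAST p. piv s i p)"
    have pp: "piv s i p" unfolding p_def using True by (meson LeastI)
    have pm: "p \<le> m" unfolding p_def using True by (meson Least_le le_trans)
    have pfirst: "\<And>j. j < p \<Longrightarrow> \<not> piv s i j" unfolding p_def using not_less_Least by blast
    have p1: "1 \<le> p" and pu: "tb_used s p = 0" and pxi: "tb_x s p i = 1" using pp by (auto simp: piv_def)
    define s' where "s' = E N i s p m"
    have cs: "col N m i s = s'" unfolding colE if_P[OF True] s'_def p_def ..
    have used': "tb_used s' = (tb_used s)(p := 1)" by (simp add: s'_def E_def)
    have av': "tb_av s' = (tb_av s)(i := 0)" by (simp add: s'_def E_def)
    have b': "\<And>i'. i' \<noteq> i \<Longrightarrow> tb_b s' i' = tb_b s i'" by (simp add: s'_def E_def)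
    have P_old: "\<And>i'. i' < i \<Longrightarrow> Pv s' i' = Pv s i'" using b' by (auto simp: Pv_def fun_eq_iff)
    have P_new: "dot N (Pv s' i) w = dot N (Yv s i p) w" for w
      by (rule dot_cong) (auto simp: Pv_def Yv_def s'_def E_def pxi)
    define el where "el j \<longleftrightarrow> p < j \<and> tb_x s j i = 1" for j
    have Y_new: "dot N (Yv s' (Suc i) j) w = dot N (Yv s i j) w + (if el j then dot N (Yv s i p) w else 0)"
      if j: "j \<in> {1..m}" "tb_used s j = 0" "j \<noteq> p" for j w
    proof (cases "el j")
      case True
      then have "dot N (Yv s' (Suc i) j) w = dot N (\<lambda>k. Yv s i j k + Yv s i p k) w"
        using j pxi by (intro dot_cong) (auto simp: Yv_def s'_def E_def el_def less_Suc_eq)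
      then show ?thesis using True dot_add by simp
    next
      case False
      have xji: "tb_x s j i = 0"
      proof (cases "j < p")
        case True then show ?thesis using pfirst[OF True] j by (auto simp: piv_def)
      next
        case False
        then show ?thesis using `\<not> el j` j by (auto simp: el_def)
      qed
      have "dot N (Yv s' (Suc i) j) w = dot N (Yv s i j) w"
        using j xji False by (intro dot_cong) (auto simp: Yv_def s'_def E_def el_def less_Suc_eq)
      then show ?thesis using False by simp
    qed
    have rng: "{1..<Suc i} = insert i {1..<i}" using i1 by auto
    have pin: "p \<in> {1..m}" using p1 pm by auto
    show ?thesis unfolding cs Inv_def
    proof (intro conjI allI)
      fix w
      have A: "(\<forall>i'\<in>{1..<Suc i}. tb_av s' i' = 0 \<longrightarrow> dot N (Pv s' i') w = 0) \<longleftrightarrow>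
          (dot N (Yv s i p) w = 0 \<and> (\<forall>i'\<in>{1..<i}. tb_av s i' = 0 \<longrightarrow> dot N (Pv s i') w = 0))"
        unfolding rng using av' P_old P_new by auto
      have B: "dot N (Yv s i p) w = 0 \<Longrightarrow>
         (\<forall>j\<in>{1..m}. tb_used s' j = 0 \<longrightarrow> dot N (Yv s' (Suc i) j) w = 0) \<longleftrightarrow>
         (\<forall>j\<in>{1..m}. tb_used s j = 0 \<longrightarrow> dot N (Yv s i j) w = 0)"
        using Y_new pin pu unfolding used' by auto
      show "(\<forall>j\<in>{1..m}. dot N (X j) w = 0) \<longleftrightarrow>
        ((\<forall>i'\<in>{1..<Suc i}. tb_av s' i' = 0 \<longrightarrow> dot N (Pv s' i') w = 0) \<and>
         (\<forall>j\<in>{1..m}. tb_used s' j = 0 \<longrightarrow> dot N (Yv s' (Suc i) j) w = 0))"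
        unfolding orth A using B pin pu by blast
    next
      show "\<forall>j\<in>{1..m}. tb_used s' j = 1 \<longrightarrow> (\<forall>k. Suc i \<le> k \<and> k \<le> N \<longrightarrow> tb_x s' j k = 0)"
        using Hb by (auto simp: s'_def E_def)
    next
      fix i' show "Suc i \<le> i' \<longrightarrow> tb_av s' i' = 1 \<and> tb_b s' i' = (\<lambda>_. 0)"
        using Hc av' b' by auto
    qed
  qed
qed

lemma Inv_init: "Inv N m X 1 (tb_init X)"
  unfolding Inv_def
proof (intro conjI allI)
  fix w
  have "dot N (Yv (tb_init X) 1 j) w = dot N (X j) w" for j
    by (rule dot_cong) (simp add: Yv_def tb_init_def)
  then show "(\<forall>j\<in>{1..m}. dot N (X j) w = 0) \<longleftrightarrow>
        ((\<forall>i'\<in>{1..<1}. tb_av (tb_init X) i' = 0 \<longrightarrow> dot N (Pv (tb_init X) i') w = 0) \<and>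
         (\<forall>j\<in>{1..m}. tb_used (tb_init X) j = 0 \<longrightarrow> dot N (Yv (tb_init X) 1 j) w = 0))"
    by (simp add: tb_init_def)
qed (simp_all add: tb_init_def)

lemma Inv_run: "i \<le> N \<Longrightarrow> Inv N m X (Suc i) (fold (col N m) [1..<Suc i] (tb_init X))"
proof (induction i)
  case 0 then show ?case using Inv_init by simp
next
  case (Suc i)
  have "[1..<Suc (Suc i)] = [1..<Suc i] @ [Suc i]" by simp
  then show ?case using col_step[OF Suc.IH _ Suc.prems] Suc.prems by simp
qed

lemma run_eq: "tb_run N m X = fold (col N m) [1..<N+1] (tb_init X)"
  unfolding tb_run_def col_def by simp

lemma dot_P_self: "1 \<le> N \<Longrightarrow> dot N (Pv s N) w = w N"
proof -
  assume "1 \<le> N"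
  have "dot N (Pv s N) w = (\<Sum>k=1..N. if k = N then w k else 0)"
    unfolding dot_def by (rule sum.cong) (auto simp: Pv_def)
  also have "\<dots> = w N" using \<open>1 \<le> N\<close> by (simp add: sum.delta)
  finally show ?thesis .
qed

lemma backsub:
  assumes avN: "tb_av s N = 1"
  shows "\<exists>w. w N = 1 \<and> (\<forall>i'. N - d \<le> i' \<longrightarrow> 1 \<le> i' \<longrightarrow> i' \<le> N \<longrightarrow> tb_av s i' = 0 \<longrightarrow> dot N (Pv s i') w = 0)"
proof (induction d)
  case 0
  show ?case
    by (rule exI[of _ "\<lambda>k. if k = N then 1 else 0"]) (use avN in auto)
next
  case (Suc d)
  show ?case
  proof (cases "N - Suc d = N - d")
    case True then show ?thesis using Suc.IH by simp
  next
    case False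
    define t where "t = N - Suc d"
    have tN: "t < N" and tS: "N - d = Suc t" using False unfolding t_def by auto
    obtain w where w1: "w N = 1"
      and wP: "\<And>i'. Suc t \<le> i' \<Longrightarrow> 1 \<le> i' \<Longrightarrow> i' \<le> N \<Longrightarrow> tb_av s i' = 0 \<Longrightarrow> dot N (Pv s i') w = 0"
      using Suc.IH unfolding tS by blast
    show ?thesis
    proof (cases "t = 0 \<or> tb_av s t = 1")
      case True
      show ?thesis unfolding t_def[symmetric]
      proof (rule exI[of _ w], intro conjI allI impI)
        fix i' assume "t \<le> i'" "1 \<le> i'" "i' \<le> N" "tb_av s i' = 0"
        then have "Suc t \<le> i'" using True by (cases "i' = t") auto
        then show "dot N (Pv s i') w = 0" using wP \<open>1 \<le> i'\<close> \<open>i' \<le> N\<close> \<open>tb_av s i' = 0\<close> by blast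
      qed (rule w1)
    next
      case False
      then have t1: "1 \<le> t" and avt: "tb_av s t = 0" by auto
      define c where "c = (\<Sum>k\<in>{t<..N}. tb_b s t k * w k)"
      define w' where "w' = w(t := c)"
      have w'1: "w' N = 1" using tN w1 unfolding w'_def by simp
      have old: "dot N (Pv s i') w' = dot N (Pv s i') w" if "t < i'" for i'
        unfolding dot_def using that by (intro sum.cong) (auto simp: Pv_def w'_def)
      have new: "dot N (Pv s t) w' = 0"
      proof -
        have "dot N (Pv s t) w' = (\<Sum>k\<in>{t..N}. Pv s t k * w' k)"
          unfolding dot_def by (rule sum.mono_neutral_right) (use t1 in \<open>auto simp: Pv_def\<close>)
        also have "{t..N} = insert t {t<..N}" using tN by auto
        also have "(\<Sum>k\<in>insert t {t<..N}. Pv s t k * w' k) = c + (\<Sum>k\<in>{t<..N}. Pv s t k * w' k)"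
          by (simp add: Pv_def w'_def)
        also have "(\<Sum>k\<in>{t<..N}. Pv s t k * w' k) = c"
          unfolding c_def by (rule sum.cong) (auto simp: Pv_def w'_def)
        finally show ?thesis by simp
      qed
      show ?thesis unfolding t_def[symmetric]
      proof (rule exI[of _ w'], intro conjI allI impI)
        fix i' assume a: "t \<le> i'" "1 \<le> i'" "i' \<le> N" "tb_av s i' = 0"
        show "dot N (Pv s i') w' = 0"
        proof (cases "i' = t")
          case True then show ?thesis using new by simp
        next
          case False
          then have "t < i'" using a by simp
          then show ?thesis using old wP a by simp
        qed
      qed (rule w'1)
    qed
  qed
qed

theorem mainTheorem7:
  fixes n m :: nat and a :: "nat \<Rightarrow> nat \<Rightarrow> bit" and eps :: "nat \<Rightarrow> bit"
  shows "(\<exists>b :: nat \<Rightarrow> bit. \<forall>j \<in> {1..m}. (\<Sum>k = 1..n. a j k * b k) = eps j)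
     \<longleftrightarrow> tb_av (tb_run (n + 1) m (\<lambda>j k. if k = n + 1 then eps j else a j k)) (n + 1) = 1"
proof -
  define N where "N = n + 1"
  define X where "X = (\<lambda>j k. if k = n + 1 then eps j else a j k)"
  define S where "S = tb_run N m X"
  have IS: "Inv N m X (Suc N) S" unfolding S_def run_eq using Inv_run[of N N m X] by simp
  have Y0: "dot N (Yv S (Suc N) j) w = 0" for j w
    unfolding dot_def Yv_def by simp
  have orthS: "(\<forall>j\<in>{1..m}. dot N (X j) w = 0) \<longleftrightarrow>
     (\<forall>i'\<in>{1..<Suc N}. tb_av S i' = 0 \<longrightarrow> dot N (Pv S i') w = 0)" for w
    using IS Y0 unfolding Inv_def by blast
  have dotX: "dot N (X j) w = (\<Sum>k = 1..n. a j k * w k) + eps j * w N" for j w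
  proof -
    have "dot N (X j) w = (\<Sum>k = 1..n. X j k * w k) + X j N * w N"
      unfolding dot_def N_def by simp
    also have "(\<Sum>k = 1..n. X j k * w k) = (\<Sum>k = 1..n. a j k * w k)"
      by (rule sum.cong) (auto simp: X_def)
    finally show ?thesis by (simp add: X_def N_def)
  qed
  have lhs: "(\<exists>b :: nat \<Rightarrow> bit. \<forall>j \<in> {1..m}. (\<Sum>k = 1..n. a j k * b k) = eps j)
     \<longleftrightarrow> (\<exists>w. w N = 1 \<and> (\<forall>j\<in>{1..m}. dot N (X j) w = 0))"
  proof
    assume "\<exists>b :: nat \<Rightarrow> bit. \<forall>j \<in> {1..m}. (\<Sum>k = 1..n. a j k * b k) = eps j"
    then obtain b :: "nat \<Rightarrow> bit" where b: "\<forall>j \<in> {1..m}. (\<Sum>k = 1..n. a j k * b k) = eps j" by blast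
    define w where "w = b(N := 1)"
    have "(\<Sum>k = 1..n. a j k * w k) = (\<Sum>k = 1..n. a j k * b k)" for j
      by (rule sum.cong) (auto simp: w_def N_def)
    then have "\<forall>j\<in>{1..m}. dot N (X j) w = 0" using b by (simp add: dotX w_def)
    moreover have "w N = 1" by (simp add: w_def)
    ultimately show "\<exists>w. w N = 1 \<and> (\<forall>j\<in>{1..m}. dot N (X j) w = 0)" by blast
  next
    assume "\<exists>w. w N = 1 \<and> (\<forall>j\<in>{1..m}. dot N (X j) w = 0)"
    then obtain w where w: "w N = 1" "\<forall>j\<in>{1..m}. dot N (X j) w = 0" by blast
    have "\<forall>j \<in> {1..m}. (\<Sum>k = 1..n. a j k * w k) = eps j"
      using w by (simp add: dotX bit_sum_zero_iff)
    then show "\<exists>b :: nat \<Rightarrow> bit. \<forall>j \<in> {1..m}. (\<Sum>k = 1..n. a j k * b k) = eps j" by blast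
  qed
  have N1: "1 \<le> N" unfolding N_def by simp
  have rhs: "(\<exists>w. w N = 1 \<and> (\<forall>j\<in>{1..m}. dot N (X j) w = 0)) \<longleftrightarrow> tb_av S N = 1"
  proof
    assume "\<exists>w. w N = 1 \<and> (\<forall>j\<in>{1..m}. dot N (X j) w = 0)"
    then obtain w where w: "w N = 1" "\<forall>j\<in>{1..m}. dot N (X j) w = 0" by blast
    show "tb_av S N = 1"
    proof (rule ccontr)
      assume "tb_av S N \<noteq> 1"
      then have "tb_av S N = 0" by simp
      then have "dot N (Pv S N) w = 0" using w orthS N1 by auto
      then show False using dot_P_self[OF N1] w by simp
    qed
  next
    assume "tb_av S N = 1"
    from backsub[OF this, of N] obtain w where w: "w N = 1"
      "\<forall>i'. N - N \<le> i' \<longrightarrow> 1 \<le> i' \<longrightarrow> i' \<le> N \<longrightarrow> tb_av S i' = 0 \<longrightarrow> dot N (Pv S i') w = 0" by blast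
    then have "\<forall>j\<in>{1..m}. dot N (X j) w = 0" unfolding orthS by auto
    then show "\<exists>w. w N = 1 \<and> (\<forall>j\<in>{1..m}. dot N (X j) w = 0)" using w by blast
  qed
  show ?thesis using lhs rhs unfolding S_def N_def X_def by blast
qed
end
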